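(* Let $f\in\mathcal{F}_3$ and $\mathbf{x}\in[0,1]^3$. (a) There exists an optimal solution $\theta$ of the linear program defining $f^{+}(\mathbf{x})$ with $\theta(\{1,2,3\})\le x_1x_2x_3$. (b) If moreover $x_1+x_2+x_3\le1$ or $x_1+x_2+x_3\ge2$, there exists an optimal solution $\theta$ of that linear program which is negatively cylinder dependent, i.e. $\sum_{S\supseteq T}\theta(S)\le\prod_{i\in T}x_i$ for every nonempty $T\subseteq[3]$.
   Context: $[n]=\{1,\dots,n\}$. A set function $f:2^{[n]}\to\mathbb{R}_+$ is monotone if $f(S)\le f(T)$ for $S\subseteq T$, submodular if $f(S)+f(T)\ge f(S\cap T)+f(S\cup T)$. $\mathcal{F}_n$ is the set of monotone submodular $f:2^{[n]}\to\mathbb{R}_+$ with $f(\emptyset)=0$, $f([n])=1$. For $\mathbf{x}\in[0,1]^n$, the concave closure $f^{+}(\mathbf{x})$ is the optimal value of the linear program: maximize $\sum_{S\subseteq[n]}\theta(S)f(S)$ over $\theta:2^{[n]}\to\mathbb{R}_{\ge0}$ with $\sum_S\theta(S)=1$ and $\sum_{S\ni i}\theta(S)=x_i$ for all $i\in[n]$. *)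

theory Defs
  imports "HOL-Analysis.Analysis"
begin

text \<open>Ground set [n] = {1..n}; set functions are maps nat set \<Rightarrow> real,
  only their values on subsets of {1..n} matter.\<close>

definition monotone_sf :: "nat \<Rightarrow> (nat set \<Rightarrow> real) \<Rightarrow> bool" where
  "monotone_sf n f \<longleftrightarrow> (\<forall>S T. S \<subseteq> T \<and> T \<subseteq> {1..n} \<longrightarrow> f S \<le> f T)"

definition submodular_sf :: "nat \<Rightarrow> (nat set \<Rightarrow> real) \<Rightarrow> bool" where
  "submodular_sf n f \<longleftrightarrow> (\<forall>S T. S \<subseteq> {1..n} \<and> T \<subseteq> {1..n} \<longrightarrow>
      f S + f T \<ge> f (S \<inter> T) + f (S \<union> T))"

definition class_F :: "nat \<Rightarrow> (nat set \<Rightarrow> real) \<Rightarrow> bool" where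
  "class_F n f \<longleftrightarrow> (\<forall>S. S \<subseteq> {1..n} \<longrightarrow> f S \<ge> 0) \<and> monotone_sf n f \<and> submodular_sf n f
      \<and> f {} = 0 \<and> f {1..n} = 1"

text \<open>Feasible solutions of the LP defining the concave closure f^+(x).\<close>
definition lp_feasible :: "nat \<Rightarrow> (nat \<Rightarrow> real) \<Rightarrow> (nat set \<Rightarrow> real) \<Rightarrow> bool" where
  "lp_feasible n x \<theta> \<longleftrightarrow> (\<forall>S. S \<subseteq> {1..n} \<longrightarrow> \<theta> S \<ge> 0)
      \<and> (\<Sum>S\<in>Pow {1..n}. \<theta> S) = 1
      \<and> (\<forall>i\<in>{1..n}. (\<Sum>S\<in>{S\<in>Pow {1..n}. i \<in> S}. \<theta> S) = x i)"

definition lp_objective :: "nat \<Rightarrow> (nat set \<Rightarrow> real) \<Rightarrow> (nat set \<Rightarrow> real) \<Rightarrow> real" where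
  "lp_objective n f \<theta> = (\<Sum>S\<in>Pow {1..n}. \<theta> S * f S)"

definition lp_optimal :: "nat \<Rightarrow> (nat set \<Rightarrow> real) \<Rightarrow> (nat \<Rightarrow> real) \<Rightarrow> (nat set \<Rightarrow> real) \<Rightarrow> bool" where
  "lp_optimal n f x \<theta> \<longleftrightarrow> lp_feasible n x \<theta>
      \<and> (\<forall>\<theta>'. lp_feasible n x \<theta>' \<longrightarrow> lp_objective n f \<theta>' \<le> lp_objective n f \<theta>)"

definition neg_cylinder_dep :: "nat \<Rightarrow> (nat \<Rightarrow> real) \<Rightarrow> (nat set \<Rightarrow> real) \<Rightarrow> bool" where
  "neg_cylinder_dep n x \<theta> \<longleftrightarrow> (\<forall>T. T \<subseteq> {1..n} \<and> T \<noteq> {} \<longrightarrow>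
      (\<Sum>S\<in>{S\<in>Pow {1..n}. T \<subseteq> S}. \<theta> S) \<le> (\<Prod>i\<in>T. x i))"

end

theory Submission imports Defs begin

lemma pow3: "Pow {1..3::nat} = {{},{1},{2},{3},{1,2},{1,3},{2,3},{1,2,3}}"
proof -
  have "{1..3::nat} = {1,2,3}" by auto
  then show ?thesis by (simp add: Pow_insert insert_commute image_insert)
qed

lemma sum_pow3: "(\<Sum>S\<in>Pow {1..3::nat}. g S) = g {} + g {1} + g {2} + g {3} + g {1,2} + g {1,3} + g {2,3} + g {1,2,3}"
proof -
  have h: "{2,3} \<noteq> {1,2,3::nat}" by (rule notI, drule arg_cong[where f="\<lambda>A. 1 \<in> A"], simp)
  have n: "{1,2} \<notin> {{1,3},{2,3},{1,2,3::nat}}" "{1,3} \<notin> {{2,3},{1,2,3::nat}}" "{2,3} \<notin> {{1,2,3::nat}}"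
    "{3} \<notin> {{1,2},{1,3},{2,3},{1,2,3::nat}}" "{2} \<notin> {{3},{1,2},{1,3},{2,3},{1,2,3::nat}}"
    "{1} \<notin> {{2},{3},{1,2},{1,3},{2,3},{1,2,3::nat}}" "{} \<notin> {{1},{2},{3},{1,2},{1,3},{2,3},{1,2,3::nat}}"
    using h by auto
  show ?thesis unfolding pow3 using n by (simp add: add.assoc del: insert_iff)
qed

lemma sum_pow3_filter: "(\<Sum>S\<in>{S\<in>Pow {1..3::nat}. P S}. g S) = (\<Sum>S\<in>Pow {1..3::nat}. if P S then g S else 0)"
  by (rule sum.inter_filter) simp

lemma feas3: "lp_feasible 3 x \<theta> \<longleftrightarrow> (\<theta> {} \<ge> 0 \<and> \<theta> {1} \<ge> 0 \<and> \<theta> {2} \<ge> 0 \<and> \<theta> {3} \<ge> 0 \<and> \<theta> {1,2} \<ge> 0 \<and> \<theta> {1,3} \<ge> 0 \<and> \<theta> {2,3} \<ge> 0 \<and> \<theta> {1,2,3} \<ge> 0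
   \<and> \<theta> {} + \<theta> {1} + \<theta> {2} + \<theta> {3} + \<theta> {1,2} + \<theta> {1,3} + \<theta> {2,3} + \<theta> {1,2,3} = 1
   \<and> \<theta> {1} + \<theta> {1,2} + \<theta> {1,3} + \<theta> {1,2,3} = x 1
   \<and> \<theta> {2} + \<theta> {1,2} + \<theta> {2,3} + \<theta> {1,2,3} = x 2
   \<and> \<theta> {3} + \<theta> {1,3} + \<theta> {2,3} + \<theta> {1,2,3} = x 3)"
proof -
  have A: "(\<forall>S. S \<subseteq> {1..3::nat} \<longrightarrow> P S) \<longleftrightarrow> (\<forall>S\<in>Pow {1..3}. P S)" for P by auto
  have B: "(\<forall>i\<in>{1..3::nat}. Q i) \<longleftrightarrow> Q 1 \<and> Q 2 \<and> Q 3" for Q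
    by (auto simp: numeral_eq_Suc le_Suc_eq)
  show ?thesis unfolding lp_feasible_def A B unfolding sum_pow3_filter sum_pow3 unfolding pow3
    by (simp add: ac_simps)
qed

lemma obj3: "lp_objective 3 f \<theta> = \<theta> {} * f {} + \<theta> {1} * f {1} + \<theta> {2} * f {2} + \<theta> {3} * f {3} + \<theta> {1,2} * f {1,2} + \<theta> {1,3} * f {1,3} + \<theta> {2,3} * f {2,3} + \<theta> {1,2,3} * f {1,2,3}"
  unfolding lp_objective_def sum_pow3 by simp

lemma ncd3: "neg_cylinder_dep 3 x \<theta> \<longleftrightarrow> (
     \<theta> {1} + \<theta> {1,2} + \<theta> {1,3} + \<theta> {1,2,3} \<le> x 1
   \<and> \<theta> {2} + \<theta> {1,2} + \<theta> {2,3} + \<theta> {1,2,3} \<le> x 2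
   \<and> \<theta> {3} + \<theta> {1,3} + \<theta> {2,3} + \<theta> {1,2,3} \<le> x 3
   \<and> \<theta> {1,2} + \<theta> {1,2,3} \<le> x 1 * x 2
   \<and> \<theta> {1,3} + \<theta> {1,2,3} \<le> x 1 * x 3
   \<and> \<theta> {2,3} + \<theta> {1,2,3} \<le> x 2 * x 3
   \<and> \<theta> {1,2,3} \<le> x 1 * x 2 * x 3)"
proof -
  have A: "(\<forall>T. T \<subseteq> {1..3::nat} \<and> T \<noteq> {} \<longrightarrow> P T) \<longleftrightarrow> (\<forall>T\<in>Pow {1..3} - {{}}. P T)" for P by auto
  show ?thesis unfolding neg_cylinder_dep_def A unfolding sum_pow3_filter sum_pow3 unfolding pow3
    by (simp add: ac_simps)
qed

lemma fF: assumes "class_F 3 f"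
  shows "f {} = 0 \<and> f {1,2,3} = 1 \<and> f {1} + f {2} \<ge> f {1,2} \<and> f {1} + f {3} \<ge> f {1,3} \<and> f {2} + f {3} \<ge> f {2,3}
    \<and> f {1} + f {2,3} \<ge> f {1,2,3} \<and> f {1,2} + f {1,3} \<ge> f {1} + f {1,2,3}
    \<and> f {1,2} + f {2,3} \<ge> f {2} + f {1,2,3} \<and> f {1,3} + f {2,3} \<ge> f {3} + f {1,2,3}"
proof -
  have e: "{1..3::nat} = {1,2,3}" by auto
  have f0: "f {} = 0" and f1: "f {1,2,3} = 1" and sm: "\<And>S T. S \<subseteq> {1,2,3} \<Longrightarrow> T \<subseteq> {1,2,3} \<Longrightarrow> f S + f T \<ge> f (S \<inter> T) + f (S \<union> T)"
    using assms unfolding class_F_def submodular_sf_def e by auto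
  have a: "f {1} + f {2} \<ge> f {1,2}" using sm[of "{1}" "{2}"] f0 by (simp add: insert_commute)
  have b: "f {1} + f {3} \<ge> f {1,3}" using sm[of "{1}" "{3}"] f0 by (simp add: insert_commute)
  have c: "f {2} + f {3} \<ge> f {2,3}" using sm[of "{2}" "{3}"] f0 by (simp add: insert_commute)
  have d: "f {1} + f {2,3} \<ge> f {1,2,3}" using sm[of "{1}" "{2,3}"] f0 by (simp add: insert_commute)
  have g: "f {1,2} + f {1,3} \<ge> f {1} + f {1,2,3}"
  proof -
    have "{1,2} \<inter> {1,3} = {1::nat}" "{1,2} \<union> {1,3} = {1,2,3::nat}" by auto
    then show ?thesis using sm[of "{1,2}" "{1,3}"] by simp
  qed
  have h: "f {1,2} + f {2,3} \<ge> f {2} + f {1,2,3}"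
  proof -
    have "{1,2} \<inter> {2,3} = {2::nat}" "{1,2} \<union> {2,3} = {1,2,3::nat}" by auto
    then show ?thesis using sm[of "{1,2}" "{2,3}"] by simp
  qed
  have i: "f {1,3} + f {2,3} \<ge> f {3} + f {1,2,3}"
  proof -
    have "{1,3} \<inter> {2,3} = {3::nat}" "{1,3} \<union> {2,3} = {1,2,3::nat}" by auto
    then show ?thesis using sm[of "{1,3}" "{2,3}"] by simp
  qed
  show ?thesis using f0 f1 a b c d g h i by simp
qed

definition mk :: "real \<Rightarrow> real \<Rightarrow> real \<Rightarrow> real \<Rightarrow> real \<Rightarrow> real \<Rightarrow> real \<Rightarrow> real \<Rightarrow> nat set \<Rightarrow> real" where
  "mk a0 a1 a2 a3 a12 a13 a23 a123 S = (if 1\<in>S then (if 2\<in>S then (if 3\<in>S then a123 else a12) else (if 3\<in>S then a13 else a1))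
     else (if 2\<in>S then (if 3\<in>S then a23 else a2) else (if 3\<in>S then a3 else a0)))"

lemma mk_simps: "mk a0 a1 a2 a3 a12 a13 a23 a123 {} = a0" "mk a0 a1 a2 a3 a12 a13 a23 a123 {1} = a1"
  "mk a0 a1 a2 a3 a12 a13 a23 a123 {2} = a2" "mk a0 a1 a2 a3 a12 a13 a23 a123 {3} = a3"
  "mk a0 a1 a2 a3 a12 a13 a23 a123 {1,2} = a12" "mk a0 a1 a2 a3 a12 a13 a23 a123 {1,3} = a13"
  "mk a0 a1 a2 a3 a12 a13 a23 a123 {2,3} = a23" "mk a0 a1 a2 a3 a12 a13 a23 a123 {1,2,3} = a123"
  by (simp_all add: mk_def)

lemma feasD: assumes "lp_feasible 3 x \<theta>"
  shows "\<theta> {} \<ge> 0" "\<theta> {1} \<ge> 0" "\<theta> {2} \<ge> 0" "\<theta> {3} \<ge> 0" "\<theta> {1,2} \<ge> 0" "\<theta> {1,3} \<ge> 0" "\<theta> {2,3} \<ge> 0" "\<theta> {1,2,3} \<ge> 0"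
   "x 1 = \<theta> {1} + \<theta> {1,2} + \<theta> {1,3} + \<theta> {1,2,3}"
   "x 2 = \<theta> {2} + \<theta> {1,2} + \<theta> {2,3} + \<theta> {1,2,3}"
   "x 3 = \<theta> {3} + \<theta> {1,3} + \<theta> {2,3} + \<theta> {1,2,3}"
   "\<theta> {} = 1 - (\<theta> {1} + \<theta> {2} + \<theta> {3} + \<theta> {1,2} + \<theta> {1,3} + \<theta> {2,3} + \<theta> {1,2,3})"
  using assms unfolding feas3 by linarith+

lemma caseA:
  assumes hf: "class_F 3 f" and hx: "\<forall>i\<in>{1..3}. 0 \<le> x i \<and> x i \<le> 1"
    and hs: "x 1 + x 2 + x 3 \<le> 1"
  shows "\<exists>\<theta>. lp_optimal 3 f x \<theta> \<and> neg_cylinder_dep 3 x \<theta> \<and> \<theta> {1,2,3} \<le> x 1 * x 2 * x 3"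
proof -
  have x: "0 \<le> x 1" "0 \<le> x 2" "0 \<le> x 3" "x 1 \<le> 1" "x 2 \<le> 1" "x 3 \<le> 1" using hx by auto
  note F = fF[OF hf]
  define \<theta> where "\<theta> = mk (1 - (x 1 + x 2 + x 3)) (x 1) (x 2) (x 3) 0 0 0 0"
  have feas: "lp_feasible 3 x \<theta>" unfolding feas3 \<theta>_def mk_simps using x hs by simp
  have opt: "lp_objective 3 f \<theta>' \<le> lp_objective 3 f \<theta>" if "lp_feasible 3 x \<theta>'" for \<theta>'
  proof -
    note e = feasD[OF that]
    have f123: "f {1,2,3} \<le> f {1} + f {2} + f {3}" using F by linarith
    have m1: "\<theta>' {1,2} * f {1,2} \<le> \<theta>' {1,2} * (f {1} + f {2})" using e F by (intro mult_left_mono) auto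
    have m2: "\<theta>' {1,3} * f {1,3} \<le> \<theta>' {1,3} * (f {1} + f {3})" using e F by (intro mult_left_mono) auto
    have m3: "\<theta>' {2,3} * f {2,3} \<le> \<theta>' {2,3} * (f {2} + f {3})" using e F by (intro mult_left_mono) auto
    have m4: "\<theta>' {1,2,3} * f {1,2,3} \<le> \<theta>' {1,2,3} * (f {1} + f {2} + f {3})" using e f123 by (intro mult_left_mono) auto
    have eq: "\<theta>' {1} * f {1} + \<theta>' {2} * f {2} + \<theta>' {3} * f {3} + \<theta>' {1,2} * (f {1} + f {2}) + \<theta>' {1,3} * (f {1} + f {3})
       + \<theta>' {2,3} * (f {2} + f {3}) + \<theta>' {1,2,3} * (f {1} + f {2} + f {3}) = x 1 * f {1} + x 2 * f {2} + x 3 * f {3}"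
      unfolding e(9-11) by (simp add: algebra_simps)
    show ?thesis unfolding obj3 \<theta>_def mk_simps using m1 m2 m3 m4 eq F by simp
  qed
  have ncd: "neg_cylinder_dep 3 x \<theta>" unfolding ncd3 \<theta>_def mk_simps using x by simp
  have t: "\<theta> {1,2,3} \<le> x 1 * x 2 * x 3" unfolding \<theta>_def mk_simps using x by simp
  show ?thesis using feas opt ncd t unfolding lp_optimal_def by blast
qed

lemma triple_bound: fixes a b c :: real
  assumes "0 \<le> a" "a \<le> 1" "0 \<le> b" "b \<le> 1" "0 \<le> c" "c \<le> 1"
  shows "a + b + c - 2 \<le> a * b * c"
proof -
  have e: "a * b * c - (a + b + c - 2) = (1 - a) * (1 - b) * c + (1 - a) * (1 - c) + (1 - b) * (1 - c)"
    by (simp add: algebra_simps)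
  have "0 \<le> (1 - a) * (1 - b) * c + (1 - a) * (1 - c) + (1 - b) * (1 - c)"
    using assms by (intro add_nonneg_nonneg mult_nonneg_nonneg) auto
  then show ?thesis using e by linarith
qed

lemma pair_bound: fixes a b :: real
  assumes "a \<le> 1" "b \<le> 1"
  shows "a + b - 1 \<le> a * b"
proof -
  have "0 \<le> (1 - a) * (1 - b)" using assms by (intro mult_nonneg_nonneg) auto
  then show ?thesis by (simp add: algebra_simps)
qed

lemma caseB:
  assumes hf: "class_F 3 f" and hx: "\<forall>i\<in>{1..3}. 0 \<le> x i \<and> x i \<le> 1"
    and hs: "x 1 + x 2 + x 3 \<ge> 2"
  shows "\<exists>\<theta>. lp_optimal 3 f x \<theta> \<and> neg_cylinder_dep 3 x \<theta> \<and> \<theta> {1,2,3} \<le> x 1 * x 2 * x 3"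
proof -
  have x: "0 \<le> x 1" "0 \<le> x 2" "0 \<le> x 3" "x 1 \<le> 1" "x 2 \<le> 1" "x 3 \<le> 1" using hx by auto
  note F = fF[OF hf]
  define \<theta> where "\<theta> = mk 0 0 0 0 (1 - x 3) (1 - x 2) (1 - x 1) (x 1 + x 2 + x 3 - 2)"
  have feas: "lp_feasible 3 x \<theta>" unfolding feas3 \<theta>_def mk_simps using x hs by simp
  have opt: "lp_objective 3 f \<theta>' \<le> lp_objective 3 f \<theta>" if "lp_feasible 3 x \<theta>'" for \<theta>'
  proof -
    note e = feasD[OF that]
    have l0: "f {} \<le> f {1,2} + f {1,3} + f {2,3} - 2" using F by linarith
    have l1: "f {1} \<le> f {1,2} + f {1,3} - 1" using F by linarith
    have l2: "f {2} \<le> f {1,2} + f {2,3} - 1" using F by linarith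
    have l3: "f {3} \<le> f {1,3} + f {2,3} - 1" using F by linarith
    have m0: "\<theta>' {} * f {} \<le> \<theta>' {} * (f {1,2} + f {1,3} + f {2,3} - 2)" using e l0 by (intro mult_left_mono) auto
    have m1: "\<theta>' {1} * f {1} \<le> \<theta>' {1} * (f {1,2} + f {1,3} - 1)" using e l1 by (intro mult_left_mono) auto
    have m2: "\<theta>' {2} * f {2} \<le> \<theta>' {2} * (f {1,2} + f {2,3} - 1)" using e l2 by (intro mult_left_mono) auto
    have m3: "\<theta>' {3} * f {3} \<le> \<theta>' {3} * (f {1,3} + f {2,3} - 1)" using e l3 by (intro mult_left_mono) auto
    have eq: "\<theta>' {} * (f {1,2} + f {1,3} + f {2,3} - 2) + \<theta>' {1} * (f {1,2} + f {1,3} - 1) + \<theta>' {2} * (f {1,2} + f {2,3} - 1)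
       + \<theta>' {3} * (f {1,3} + f {2,3} - 1) + \<theta>' {1,2} * f {1,2} + \<theta>' {1,3} * f {1,3} + \<theta>' {2,3} * f {2,3} + \<theta>' {1,2,3}
       = (1 - x 3) * f {1,2} + (1 - x 2) * f {1,3} + (1 - x 1) * f {2,3} + (x 1 + x 2 + x 3 - 2)"
      unfolding e(9-12) by (simp add: algebra_simps)
    show ?thesis unfolding obj3 \<theta>_def mk_simps using m0 m1 m2 m3 eq F by simp
  qed
  have ncd: "neg_cylinder_dep 3 x \<theta>" unfolding ncd3 \<theta>_def mk_simps
    using x pair_bound[of "x 1" "x 2"] pair_bound[of "x 1" "x 3"] pair_bound[of "x 2" "x 3"]
      triple_bound[of "x 1" "x 2" "x 3"] by simp
  have t: "\<theta> {1,2,3} \<le> x 1 * x 2 * x 3" unfolding \<theta>_def mk_simps using x triple_bound[of "x 1" "x 2" "x 3"] by simp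
  show ?thesis using feas opt ncd t unfolding lp_optimal_def by blast
qed

lemma caseC:
  assumes hf: "class_F 3 f" and hx: "\<forall>i\<in>{1..3}. 0 \<le> x i \<and> x i \<le> 1"
    and hs: "x 1 + x 2 + x 3 \<le> 2"
  shows "\<exists>\<theta>. lp_optimal 3 f x \<theta> \<and> \<theta> {1,2,3} \<le> x 1 * x 2 * x 3"
proof -
  have x: "0 \<le> x 1" "0 \<le> x 2" "0 \<le> x 3" "x 1 \<le> 1" "x 2 \<le> 1" "x 3 \<le> 1" using hx by auto
  note F = fF[OF hf]
  define s where "s = x 1 + x 2 + x 3"
  define P where "P = {t::real\<times>real\<times>real. 0 \<le> fst t \<and> 0 \<le> fst (snd t) \<and> 0 \<le> snd (snd t)
     \<and> fst t + fst (snd t) \<le> x 1 \<and> fst t + snd (snd t) \<le> x 2 \<and> fst (snd t) + snd (snd t) \<le> x 3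
     \<and> 0 \<le> 1 - s + fst t + fst (snd t) + snd (snd t)}"
  define \<Theta> where "\<Theta> t = mk (1 - s + fst t + fst (snd t) + snd (snd t)) (x 1 - fst t - fst (snd t))
     (x 2 - fst t - snd (snd t)) (x 3 - fst (snd t) - snd (snd t)) (fst t) (fst (snd t)) (snd (snd t)) 0" for t
  define \<phi> where "\<phi> t = lp_objective 3 f (\<Theta> t)" for t
  have \<Theta>F: "lp_feasible 3 x (\<Theta> t)" if "t \<in> P" for t
    using that unfolding feas3 \<Theta>_def mk_simps P_def s_def by (auto simp: algebra_simps)
  have dom: "\<exists>t\<in>P. lp_objective 3 f \<theta> \<le> \<phi> t" if "lp_feasible 3 x \<theta>" for \<theta>
  proof -
    note e = feasD[OF that]
    define D where "D = \<theta> {1} + \<theta> {2} + \<theta> {3} + 2 * \<theta> {}"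
    define d where "d = \<theta> {1,2,3}"
    define l where "l = d / D"
    have dD: "d \<le> D" using e hs unfolding d_def D_def by linarith
    have d0: "0 \<le> d" "0 \<le> D" using e unfolding d_def D_def by auto
    have l0: "0 \<le> l" unfolding l_def using d0 by simp
    have lD: "l * D = d" and l1: "l \<le> 1"
    proof -
      have "(l * D = d) \<and> l \<le> 1"
      proof (cases "D = 0")
        case True then show ?thesis using dD d0 unfolding l_def by simp
      next
        case False then show ?thesis using dD d0 unfolding l_def by simp
      qed
      then show "l * D = d" "l \<le> 1" by auto
    qed
    have lDe: "\<theta> {1,2,3} = l * \<theta> {1} + l * \<theta> {2} + l * \<theta> {3} + 2 * (l * \<theta> {})"
      using lD unfolding D_def d_def by (simp add: algebra_simps)
    define p where "p = \<theta> {1,2} + l * (\<theta> {1} + \<theta> {2} + \<theta> {})"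
    define q where "q = \<theta> {1,3} + l * (\<theta> {1} + \<theta> {3} + \<theta> {})"
    define r where "r = \<theta> {2,3} + l * (\<theta> {2} + \<theta> {3} + \<theta> {})"
    define t where "t = (p, q, r)"
    have V0: "\<Theta> t {} = (1 - l) * \<theta> {}"
      unfolding \<Theta>_def mk_simps t_def fst_conv snd_conv s_def p_def q_def r_def e(9-11)
      apply (simp add: algebra_simps) using lDe e(12) unfolding One_nat_def by linarith
    have V1: "\<Theta> t {1} = (1 - l) * \<theta> {1}"
      unfolding \<Theta>_def mk_simps t_def fst_conv snd_conv s_def p_def q_def r_def e(9-11)
      apply (simp add: algebra_simps) using lDe unfolding One_nat_def by linarith
    have V2: "\<Theta> t {2} = (1 - l) * \<theta> {2}"
      unfolding \<Theta>_def mk_simps t_def fst_conv snd_conv s_def p_def q_def r_def e(9-11)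
      apply (simp add: algebra_simps) using lDe unfolding One_nat_def by linarith
    have V3: "\<Theta> t {3} = (1 - l) * \<theta> {3}"
      unfolding \<Theta>_def mk_simps t_def fst_conv snd_conv s_def p_def q_def r_def e(9-11)
      apply (simp add: algebra_simps) using lDe unfolding One_nat_def by linarith
    have V4: "\<Theta> t {1,2} = p" "\<Theta> t {1,3} = q" "\<Theta> t {2,3} = r" "\<Theta> t {1,2,3} = 0"
      unfolding \<Theta>_def mk_simps t_def by simp_all
    have pos: "0 \<le> (1 - l) * \<theta> {}" "0 \<le> (1 - l) * \<theta> {1}" "0 \<le> (1 - l) * \<theta> {2}" "0 \<le> (1 - l) * \<theta> {3}"
      using l1 e by (auto intro!: mult_nonneg_nonneg)
    have pqr: "0 \<le> p" "0 \<le> q" "0 \<le> r" unfolding p_def q_def r_def using l0 e by (auto intro!: add_nonneg_nonneg mult_nonneg_nonneg)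
    have tP: "t \<in> P"
    proof -
      have "\<Theta> t {1} = x 1 - p - q" "\<Theta> t {2} = x 2 - p - r" "\<Theta> t {3} = x 3 - q - r" "\<Theta> t {} = 1 - s + p + q + r"
        unfolding \<Theta>_def mk_simps t_def by simp_all
      then show ?thesis using V0 V1 V2 V3 pos pqr unfolding P_def t_def by auto
    qed
    have ph: "\<phi> t = (1 - l) * \<theta> {} * f {} + (1 - l) * \<theta> {1} * f {1} + (1 - l) * \<theta> {2} * f {2} + (1 - l) * \<theta> {3} * f {3}
       + p * f {1,2} + q * f {1,3} + r * f {2,3}"
      unfolding \<phi>_def obj3 V0 V1 V2 V3 V4 by simp
    have diff: "\<phi> t - lp_objective 3 f \<theta> = l * \<theta> {1} * (f {1,2} + f {1,3} - f {1} - 1) + l * \<theta> {2} * (f {1,2} + f {2,3} - f {2} - 1)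
       + l * \<theta> {3} * (f {1,3} + f {2,3} - f {3} - 1) + l * \<theta> {} * (f {1,2} + f {1,3} + f {2,3} - f {} - 2)"
      unfolding ph obj3 lDe p_def q_def r_def using F by (simp add: algebra_simps)
    have "0 \<le> l * \<theta> {1} * (f {1,2} + f {1,3} - f {1} - 1) + l * \<theta> {2} * (f {1,2} + f {2,3} - f {2} - 1)
       + l * \<theta> {3} * (f {1,3} + f {2,3} - f {3} - 1) + l * \<theta> {} * (f {1,2} + f {1,3} + f {2,3} - f {} - 2)"
      using F e l0 by (intro add_nonneg_nonneg mult_nonneg_nonneg) auto
    then show ?thesis using tP diff by force
  qed
  have closedP: "closed P" unfolding P_def
    by (intro closed_Collect_conj closed_Collect_le continuous_intros)
  have bndP: "bounded P"
  proof (rule bounded_subset[OF bounded_cbox[of "(0,0,0)" "(1,1,1)"]])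
    show "P \<subseteq> cbox (0, 0, 0) (1::real, 1::real, 1::real)"
    proof
      fix t assume "t \<in> P"
      moreover obtain a b c where "t = (a, b, c)" by (metis prod.exhaust)
      ultimately show "t \<in> cbox (0, 0, 0) (1, 1, 1)" using x unfolding P_def by auto
    qed
  qed
  have cP: "compact P" using closedP bndP compact_eq_bounded_closed by blast
  have neP: "P \<noteq> {}"
  proof -
    define \<theta> where "\<theta> = mk ((1 - x 1) * (1 - x 2) * (1 - x 3)) (x 1 * (1 - x 2) * (1 - x 3)) ((1 - x 1) * x 2 * (1 - x 3))
       ((1 - x 1) * (1 - x 2) * x 3) (x 1 * x 2 * (1 - x 3)) (x 1 * (1 - x 2) * x 3) ((1 - x 1) * x 2 * x 3) (x 1 * x 2 * x 3)"
    have "lp_feasible 3 x \<theta>" unfolding feas3 \<theta>_def mk_simps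
      apply (intro conjI)
      apply (use x in \<open>(intro mult_nonneg_nonneg; simp)\<close>)+
      by (simp_all add: algebra_simps)
    then show ?thesis using dom by blast
  qed
  have phe: "\<phi> = (\<lambda>t. (1 - s + fst t + fst (snd t) + snd (snd t)) * f {} + (x 1 - fst t - fst (snd t)) * f {1}
     + (x 2 - fst t - snd (snd t)) * f {2} + (x 3 - fst (snd t) - snd (snd t)) * f {3}
     + fst t * f {1,2} + fst (snd t) * f {1,3} + snd (snd t) * f {2,3})"
    unfolding \<phi>_def obj3 \<Theta>_def mk_simps by simp
  have cont: "continuous_on P \<phi>" unfolding phe by (intro continuous_intros)
  obtain t0 where t0: "t0 \<in> P" "\<And>t. t \<in> P \<Longrightarrow> \<phi> t \<le> \<phi> t0"
    using continuous_attains_sup[OF cP neP cont] by blast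
  have opt: "lp_optimal 3 f x (\<Theta> t0)"
    unfolding lp_optimal_def
  proof (intro conjI allI impI)
    show "lp_feasible 3 x (\<Theta> t0)" using \<Theta>F t0 by blast
    fix \<theta>' assume "lp_feasible 3 x \<theta>'"
    then obtain t where "t \<in> P" "lp_objective 3 f \<theta>' \<le> \<phi> t" using dom by blast
    then show "lp_objective 3 f \<theta>' \<le> lp_objective 3 f (\<Theta> t0)" using t0 unfolding \<phi>_def by fastforce
  qed
  have "\<Theta> t0 {1,2,3} \<le> x 1 * x 2 * x 3" unfolding \<Theta>_def mk_simps using x by simp
  then show ?thesis using opt by blast
qed

theorem mainTheorem7:
  fixes f :: "nat set \<Rightarrow> real" and x :: "nat \<Rightarrow> real"
  assumes hf: "class_F 3 f"
    and hx: "\<forall>i\<in>{1..3}. 0 \<le> x i \<and> x i \<le> 1"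
  shows "(\<exists>\<theta>. lp_optimal 3 f x \<theta> \<and> \<theta> {1,2,3} \<le> x 1 * x 2 * x 3)
    \<and> (x 1 + x 2 + x 3 \<le> 1 \<or> x 1 + x 2 + x 3 \<ge> 2 \<longrightarrow>
         (\<exists>\<theta>. lp_optimal 3 f x \<theta> \<and> neg_cylinder_dep 3 x \<theta>))"
proof (cases "x 1 + x 2 + x 3 \<le> 1")
  case True
  then show ?thesis using caseA[OF hf hx] by blast
next
  case False
  show ?thesis
  proof (cases "x 1 + x 2 + x 3 \<ge> 2")
    case True
    then show ?thesis using caseB[OF hf hx] by blast
  next
    case False2: False
    then show ?thesis using False caseC[OF hf hx] by auto
  qed
qed

end
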